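(* For every CZ gate $\mathrm{CZ}$ acting on $n$ qubits and every real $1<r<n$, there exists an operator $\widetilde{\mathrm{CZ}}$ such that $\|\mathrm{CZ}-\widetilde{\mathrm{CZ}}\|\le2^{1-2^{-8}r}$ and $\deg(\widetilde{\mathrm{CZ}})\le\sqrt{nr}$.
   Context: The $n$-qubit CZ gate is $\mathrm{CZ}=I-2|1^n\rangle\langle1^n|$. $\|\cdot\|$ is the spectral norm. Pauli degree: with $P_\sigma=\bigotimes_iP_{\sigma_i}$, $P_0=I,P_1=X,P_2=Y,P_3=Z$, $A=\sum_\sigma\hat A(\sigma)P_\sigma$ and $\deg(A)=\max\{|\{i:\sigma_i\ne0\}|:\hat A(\sigma)\ne0\}$. *)

theory Defs
  imports "Jordan_Normal_Form.Matrix"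
begin

text \<open>n-qubit operators are 2^n x 2^n complex matrices; basis index i < 2^n encodes the
bit string whose k-th bit (qubit k) is (i div 2^k) mod 2.\<close>

definition qbit :: "nat \<Rightarrow> nat \<Rightarrow> nat" where
  "qbit i k = (i div 2 ^ k) mod 2"

text \<open>Single-qubit Paulis P_0 = I, P_1 = X, P_2 = Y, P_3 = Z, entry (a,b) with a,b in {0,1}.\<close>
definition pauli1 :: "nat \<Rightarrow> nat \<Rightarrow> nat \<Rightarrow> complex" where
  "pauli1 s a b =
     (if s = 0 then (if a = b then 1 else 0)
      else if s = 1 then (if a = b then 0 else 1)
      else if s = 2 then (if a = b then 0 else if a = 0 then - \<i> else \<i>)
      else (if a = b then (if a = 0 then 1 else -1) else 0))"

definition pauli_strings :: "nat \<Rightarrow> (nat \<Rightarrow> nat) set" where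
  "pauli_strings n = PiE {..<n} (\<lambda>_. {..<4})"

definition pauli_str :: "nat \<Rightarrow> (nat \<Rightarrow> nat) \<Rightarrow> complex mat" where
  "pauli_str n \<sigma> = mat (2 ^ n) (2 ^ n)
     (\<lambda>(i, j). \<Prod>k<n. pauli1 (\<sigma> k) (qbit i k) (qbit j k))"

definition mat_trace :: "complex mat \<Rightarrow> complex" where
  "mat_trace A = (\<Sum>i<dim_row A. A $$ (i, i))"

text \<open>Pauli coefficient hat A(sigma); A = sum_sigma hat A(sigma) P_sigma.\<close>
definition pauli_coeff :: "nat \<Rightarrow> complex mat \<Rightarrow> (nat \<Rightarrow> nat) \<Rightarrow> complex" where
  "pauli_coeff n A \<sigma> = mat_trace (pauli_str n \<sigma> * A) / 2 ^ n"

definition pauli_weight :: "nat \<Rightarrow> (nat \<Rightarrow> nat) \<Rightarrow> nat" where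
  "pauli_weight n \<sigma> = card {i. i < n \<and> \<sigma> i \<noteq> 0}"

text \<open>Pauli degree (convention: degree of the zero operator is 0).\<close>
definition pauli_deg :: "nat \<Rightarrow> complex mat \<Rightarrow> nat" where
  "pauli_deg n A = Max (insert 0
     (pauli_weight n ` {\<sigma> \<in> pauli_strings n. pauli_coeff n A \<sigma> \<noteq> 0}))"

definition vnorm :: "complex vec \<Rightarrow> real" where
  "vnorm v = sqrt (\<Sum>i<dim_vec v. (cmod (v $ i))\<^sup>2)"

definition spec_norm :: "complex mat \<Rightarrow> real" where
  "spec_norm A = Sup {vnorm (A *\<^sub>v v) | v. v \<in> carrier_vec (dim_col A) \<and> vnorm v \<le> 1}"

text \<open>CZ = I - 2 |1^n><1^n|; the all-ones string is index 2^n - 1.\<close>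
definition CZ :: "nat \<Rightarrow> complex mat" where
  "CZ n = mat (2 ^ n) (2 ^ n)
     (\<lambda>(i, j). if i = j then (if i = 2 ^ n - 1 then -1 else 1) else 0)"

end

theory Submission
  imports Defs "HOL-Computational_Algebra.Polynomial"
begin


definition wt :: "nat \<Rightarrow> nat \<Rightarrow> nat" where
  "wt n i = (\<Sum>k<n. qbit i k)"

lemma sum_split_add: "(\<Sum>i<a+b. f i) = (\<Sum>i<a. f i) + (\<Sum>i<b. f (i + a))"
  for f :: "nat \<Rightarrow> 'a::comm_monoid_add"
  by (induction b) (auto simp: add.commute add.left_commute)

lemma qbit_high0: "i < 2^n \<Longrightarrow> qbit i n = 0"
  by (simp add: qbit_def)

lemma qbit_high1: "i < 2^n \<Longrightarrow> qbit (i + 2^n) n = 1"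
  by (simp add: qbit_def)

lemma qbit_low: assumes "k < n" shows "qbit (i + 2^n) k = qbit i k"
proof -
  have e: "(2::nat)^n = 2^k * 2^(n-k)" using assms by (simp flip: power_add)
  have "(i + 2^n) div 2^k = i div 2^k + 2^(n-k)"
    by (simp add: e)
  moreover obtain c where "(2::nat)^(n-k) = 2 * c" using assms
    by (metis Suc_diff_Suc power_Suc zero_less_diff)
  ultimately show ?thesis unfolding qbit_def by simp
qed

lemma wt_Suc_low: "i < 2^n \<Longrightarrow> wt (Suc n) i = wt n i"
  by (simp add: wt_def qbit_high0)

lemma wt_Suc_high: "i < 2^n \<Longrightarrow> wt (Suc n) (i + 2^n) = wt n i + 1"
  by (simp add: wt_def qbit_high1 qbit_low)

lemma prod_Suc_low: "i < 2^n \<Longrightarrow>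
  (\<Prod>k<Suc n. g k (qbit i k)) = (\<Prod>k<n. g k (qbit i k)) * g n 0"
  by (simp add: qbit_high0)

lemma prod_Suc_high: "i < 2^n \<Longrightarrow>
  (\<Prod>k<Suc n. g k (qbit (i + 2^n) k)) = (\<Prod>k<n. g k (qbit i k)) * g n 1"
  by (simp add: qbit_high1 qbit_low)

lemma degree_diff_shift:
  fixes p :: "real poly"
  assumes "degree p > 0"
  shows "degree (p - p \<circ>\<^sub>p [:1,1:]) < degree p"
proof -
  let ?q = "p \<circ>\<^sub>p [:1,1:]"
  have dq: "degree ?q = degree p" by (simp add: degree_pcompose)
  have lq: "lead_coeff ?q = lead_coeff p" by (simp add: lead_coeff_comp)
  have d: "degree (p - ?q) \<le> degree p" using degree_diff_le[of p "degree p" ?q] dq by simp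
  have c: "coeff (p - ?q) (degree p) = 0" using lq dq by simp
  show ?thesis
  proof (rule ccontr)
    assume "\<not> ?thesis"
    then have "degree (p - ?q) = degree p" using d by simp
    then have "p - ?q = 0" using c by (metis leading_coeff_0_iff)
    then show False using assms \<open>degree (p - ?q) = degree p\<close> by simp
  qed
qed

definition pz :: "nat \<Rightarrow> nat \<Rightarrow> complex" where
  "pz s b = pauli1 s b b"

lemma parity_sum:
  fixes p :: "real poly"
  shows "degree p < card {k. k < n \<and> \<tau> k \<noteq> 0} \<Longrightarrow>
    (\<Sum>i<2^n. (\<Prod>k<n. pz (\<tau> k) (qbit i k)) * of_real (poly p (real (wt n i)))) = 0"
proof (induction n arbitrary: p)
  case 0
  then show ?case by simp
next
  case (Suc n)
  define \<chi> where "\<chi> i = (\<Prod>k<n. pz (\<tau> k) (qbit i k))" for i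
  define c0 where "c0 = pz (\<tau> n) 0"
  define c1 where "c1 = pz (\<tau> n) 1"
  have "(\<Sum>i<2^(Suc n). (\<Prod>k<Suc n. pz (\<tau> k) (qbit i k)) * of_real (poly p (real (wt (Suc n) i))))
     = (\<Sum>i<2^n. (\<Prod>k<Suc n. pz (\<tau> k) (qbit i k)) * of_real (poly p (real (wt (Suc n) i))))
     + (\<Sum>i<2^n. (\<Prod>k<Suc n. pz (\<tau> k) (qbit (i + 2^n) k)) * of_real (poly p (real (wt (Suc n) (i+2^n)))))"
    using sum_split_add[where a="2^n" and b="2^n"] by (simp add: mult_2)
  also have "\<dots> = (\<Sum>i<2^n. \<chi> i * (c0 * of_real (poly p (real (wt n i))) + c1 * of_real (poly p (1 + real (wt n i)))))"
    unfolding sum.distrib[symmetric] 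
    by (rule sum.cong) (auto simp del: prod.lessThan_Suc simp add: prod_Suc_low[where g="\<lambda>k b. pz (\<tau> k) b"]
         prod_Suc_high[where g="\<lambda>k b. pz (\<tau> k) b"] wt_Suc_low wt_Suc_high \<chi>_def c0_def c1_def
         algebra_simps)
  finally have E: "(\<Sum>i<2^(Suc n). (\<Prod>k<Suc n. pz (\<tau> k) (qbit i k)) * of_real (poly p (real (wt (Suc n) i))))
     = (\<Sum>i<2^n. \<chi> i * (c0 * of_real (poly p (real (wt n i))) + c1 * of_real (poly p (1 + real (wt n i)))))" .
  have pc: "poly (p \<circ>\<^sub>p [:1,1:]) x = poly p (1 + x)" for x by (simp add: poly_pcompose)
  show ?case
  proof (cases "\<tau> n = 0")
    case True
    have cards: "{k. k < Suc n \<and> \<tau> k \<noteq> 0} = {k. k < n \<and> \<tau> k \<noteq> 0}"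
      using True less_Suc_eq by auto
    have c: "c0 = 1" "c1 = 1" using True by (auto simp: c0_def c1_def pz_def pauli1_def)
    have "degree (p + p \<circ>\<^sub>p [:1,1:]) < card {k. k < n \<and> \<tau> k \<noteq> 0}"
      using Suc.prems cards degree_add_le[of p "degree p" "p \<circ>\<^sub>p [:1,1:]"]
      by (simp add: degree_pcompose)
    from Suc.IH[OF this] show ?thesis
      unfolding E c by (simp add: pc \<chi>_def algebra_simps)
  next
    case False
    have cards: "{k. k < Suc n \<and> \<tau> k \<noteq> 0} = insert n {k. k < n \<and> \<tau> k \<noteq> 0}"
      using False less_Suc_eq by auto
    have cardeq: "card {k. k < Suc n \<and> \<tau> k \<noteq> 0} = Suc (card {k. k < n \<and> \<tau> k \<noteq> 0})"
      unfolding cards by simp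
    show ?thesis
    proof (cases "\<tau> n = 1 \<or> \<tau> n = 2")
      case True
      then have "c0 = 0" "c1 = 0" by (auto simp: c0_def c1_def pz_def pauli1_def)
      then show ?thesis unfolding E by simp
    next
      case F2: False
      then have c: "c0 = 1" "c1 = -1" using False by (auto simp: c0_def c1_def pz_def pauli1_def)
      show ?thesis
      proof (cases "p - p \<circ>\<^sub>p [:1,1:] = 0")
        case True
        then have "poly p (1 + x) = poly p x" for x
          by (metis pc diff_eq_diff_eq diff_self poly_diff poly_0)
        then show ?thesis unfolding E c by simp
      next
        case F3: False
        have "degree p > 0"
        proof (rule ccontr)
          assume "\<not> degree p > 0"
          then obtain a where "p = [:a:]" by (metis degree_eq_zeroE not_gr_zero)
          then show False using F3 by simp
        qed
        then have "degree (p - p \<circ>\<^sub>p [:1,1:]) < card {k. k < n \<and> \<tau> k \<noteq> 0}"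
          using degree_diff_shift[of p] Suc.prems cardeq by linarith
        from Suc.IH[OF this] show ?thesis
          unfolding E c by (simp add: pc \<chi>_def algebra_simps sum_subtractf)
      qed
    qed
  qed
qed

definition diagm :: "nat \<Rightarrow> (nat \<Rightarrow> complex) \<Rightarrow> complex mat" where
  "diagm N f = mat N N (\<lambda>(i,j). if i = j then f i else 0)"

lemma trace_pauli_diag:
  "mat_trace (pauli_str n \<sigma> * diagm (2^n) f) =
     (\<Sum>i<2^n. (\<Prod>k<n. pz (\<sigma> k) (qbit i k)) * f i)"
proof -
  have "(pauli_str n \<sigma> * diagm (2^n) f) $$ (i,i) = (\<Prod>k<n. pz (\<sigma> k) (qbit i k)) * f i"
    if "i < 2^n" for i
  proof -
    have "(pauli_str n \<sigma> * diagm (2^n) f) $$ (i,i) =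
       (\<Sum>j = 0..<2^n. pauli_str n \<sigma> $$ (i, j) * (if j = i then f j else 0))"
      using that by (simp add: index_mult_mat scalar_prod_def pauli_str_def diagm_def)
    also have "\<dots> = (\<Sum>j = 0..<2^n. if j = i then pauli_str n \<sigma> $$ (i, i) * f i else 0)"
      by (rule sum.cong) auto
    also have "\<dots> = pauli_str n \<sigma> $$ (i, i) * f i"
      using that by (simp add: sum.delta')
    finally show ?thesis using that by (simp add: pauli_str_def pz_def)
  qed
  then show ?thesis unfolding mat_trace_def
    by (simp add: pauli_str_def)
qed

lemma finite_pauli_strings: "finite (pauli_strings n)"
  unfolding pauli_strings_def by (simp add: finite_PiE)

lemma pauli_deg_diag:
  fixes p :: "real poly"
  shows "pauli_deg n (diagm (2^n) (\<lambda>i. of_real (poly p (real (wt n i))))) \<le> degree p"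
proof -
  let ?D = "diagm (2^n) (\<lambda>i. of_real (poly p (real (wt n i))))"
  have "pauli_weight n \<sigma> \<le> degree p" if "pauli_coeff n ?D \<sigma> \<noteq> 0" for \<sigma>
  proof (rule ccontr)
    assume "\<not> ?thesis"
    then have "degree p < card {k. k < n \<and> \<sigma> k \<noteq> 0}" by (simp add: pauli_weight_def)
    from parity_sum[OF this] have "mat_trace (pauli_str n \<sigma> * ?D) = 0"
      by (simp add: trace_pauli_diag)
    then show False using that by (simp add: pauli_coeff_def)
  qed
  then show ?thesis unfolding pauli_deg_def
    by (subst Max_le_iff) (auto simp: finite_pauli_strings)
qed

lemma vnorm_le: assumes "\<And>i. i < dim_vec v \<Longrightarrow> cmod (w $ i) \<le> e * cmod (v $ i)"
  and "dim_vec w = dim_vec v" and "0 \<le> e"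
  shows "vnorm w \<le> e * vnorm v"
proof -
  have "(\<Sum>i<dim_vec w. (cmod (w $ i))\<^sup>2) \<le> (\<Sum>i<dim_vec v. (e * cmod (v $ i))\<^sup>2)"
    using assms by (auto intro!: sum_mono power_mono)
  also have "\<dots> = e\<^sup>2 * (\<Sum>i<dim_vec v. (cmod (v $ i))\<^sup>2)"
    by (simp add: power_mult_distrib sum_distrib_left)
  finally have "sqrt (\<Sum>i<dim_vec w. (cmod (w $ i))\<^sup>2) \<le> sqrt (e\<^sup>2 * (\<Sum>i<dim_vec v. (cmod (v $ i))\<^sup>2))"
    by (rule real_sqrt_le_mono)
  then show ?thesis using assms(3) by (simp add: vnorm_def real_sqrt_mult)
qed

lemma spec_norm_diag:
  assumes "\<And>i. i < N \<Longrightarrow> cmod (f i) \<le> e" and "0 \<le> e"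
  shows "spec_norm (diagm N f) \<le> e"
  unfolding spec_norm_def
proof (rule cSup_least)
  show "{vnorm (diagm N f *\<^sub>v v) |v. v \<in> carrier_vec (dim_col (diagm N f)) \<and> vnorm v \<le> 1} \<noteq> {}"
  proof -
    have "0\<^sub>v N \<in> carrier_vec (dim_col (diagm N f)) \<and> vnorm (0\<^sub>v N) \<le> 1" by (simp add: vnorm_def diagm_def)
    then show ?thesis by blast
  qed
next
  fix x assume "x \<in> {vnorm (diagm N f *\<^sub>v v) |v. v \<in> carrier_vec (dim_col (diagm N f)) \<and> vnorm v \<le> 1}"
  then obtain v where v: "v \<in> carrier_vec N" "vnorm v \<le> 1" and x: "x = vnorm (diagm N f *\<^sub>v v)"
    by (auto simp: diagm_def)
  have ent: "(diagm N f *\<^sub>v v) $ i = f i * v $ i" if "i < N" for i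
  proof -
    have "(diagm N f *\<^sub>v v) $ i = (\<Sum>j = 0..<N. (if i = j then f i else 0) * v $ j)"
      using that v by (simp add: mult_mat_vec_def scalar_prod_def diagm_def)
    also have "\<dots> = (\<Sum>j = 0..<N. if j = i then f i * v $ i else 0)"
      by (rule sum.cong) auto
    also have "\<dots> = f i * v $ i" using that by (simp add: sum.delta')
    finally show ?thesis .
  qed
  have "vnorm (diagm N f *\<^sub>v v) \<le> e * vnorm v"
    by (rule vnorm_le) (use v ent assms in \<open>auto simp: diagm_def norm_mult intro: mult_right_mono\<close>)
  also have "\<dots> \<le> e" using v assms(2) by (simp add: mult_left_le)
  finally show "x \<le> e" using x by simp
qed

lemma wt_le: "wt n i \<le> n"
proof -
  have "wt n i \<le> (\<Sum>k<n. 1)" unfolding wt_def by (rule sum_mono) (simp add: qbit_def)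
  then show ?thesis by simp
qed

lemma wt_full: "i < 2^n \<Longrightarrow> (wt n i = n \<longleftrightarrow> i = 2^n - 1)"
proof (induction n arbitrary: i)
  case 0
  then show ?case by (simp add: wt_def)
next
  case (Suc n)
  show ?case
  proof (cases "i < 2^n")
    case True
    have "i \<noteq> 2^(Suc n) - 1" using True by simp
    moreover have "wt (Suc n) i \<noteq> Suc n" using True wt_le[of n i] by (simp add: wt_Suc_low)
    ultimately show ?thesis by simp
  next
    case False
    define j where "j = i - 2^n"
    have i: "i = j + 2^n" and j: "j < 2^n" using False Suc.prems by (auto simp: j_def)
    have "wt (Suc n) i = wt n j + 1" using i j wt_Suc_high by simp
    then show ?thesis using Suc.IH[OF j] i j by auto
  qed
qed

lemma construct_from_poly:
  fixes Q :: "real poly" and e :: real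
  assumes Q0: "\<bar>poly Q 0 - 1\<bar> \<le> e" and Qb: "\<And>s::nat. 1 \<le> s \<Longrightarrow> s \<le> n \<Longrightarrow> \<bar>poly Q (real s)\<bar> \<le> e"
    and e0: "0 \<le> e"
  shows "\<exists>CZt \<in> carrier_mat (2 ^ n) (2 ^ n). spec_norm (CZ n - CZt) \<le> 2 * e
          \<and> pauli_deg n CZt \<le> degree Q"
proof -
  define p where "p = [:1:] - smult 2 (Q \<circ>\<^sub>p [:real n, -1:])"
  have pp: "poly p x = 1 - 2 * poly Q (real n - x)" for x by (simp add: p_def poly_pcompose)
  have dp: "degree p \<le> degree Q"
    unfolding p_def using degree_diff_le[of "[:1:]" "degree Q" "smult 2 (Q \<circ>\<^sub>p [:real n, -1:])"]
    by (simp add: degree_pcompose)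
  define D where "D = diagm (2^n) (\<lambda>i. of_real (poly p (real (wt n i))))"
  have Dc: "D \<in> carrier_mat (2^n) (2^n)" by (simp add: D_def diagm_def)
  have diff: "CZ n - D = diagm (2^n) (\<lambda>i. (if i = 2^n - 1 then -1 else 1) - of_real (poly p (real (wt n i))))"
    by (rule eq_matI) (auto simp: CZ_def D_def diagm_def)
  have "spec_norm (CZ n - D) \<le> 2 * e"
    unfolding diff
  proof (rule spec_norm_diag)
    fix i :: nat assume i: "i < 2^n"
    show "cmod ((if i = 2^n - 1 then -1 else 1) - complex_of_real (poly p (real (wt n i)))) \<le> 2 * e"
    proof (cases "i = 2^n - 1")
      case True
      then have "wt n i = n" using wt_full[OF i] by simp
      then have "(-1::complex) - complex_of_real (poly p (real (wt n i))) = of_real (2 * (poly Q 0 - 1))"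
        by (simp add: pp)
      then have "cmod ((-1::complex) - complex_of_real (poly p (real (wt n i)))) = 2 * \<bar>poly Q 0 - 1\<bar>"
        by (simp only: norm_of_real abs_mult)
      then show ?thesis using True Q0 by simp
    next
      case False
      then have w: "wt n i < n" using wt_full[OF i] wt_le[of n i] by simp
      define s where "s = n - wt n i"
      have s: "1 \<le> s" "s \<le> n" "real n - real (wt n i) = real s" using w by (auto simp: s_def)
      have "(1::complex) - complex_of_real (poly p (real (wt n i))) = of_real (2 * poly Q (real s))"
        using s by (simp add: pp)
      then have "cmod ((1::complex) - complex_of_real (poly p (real (wt n i)))) = 2 * \<bar>poly Q (real s)\<bar>"
        by (simp only: norm_of_real)
      then show ?thesis using False Qb[OF s(1,2)] by simp
    qed
  qed (use e0 in simp)
  moreover have "pauli_deg n D \<le> degree Q"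
    using pauli_deg_diag[of n p] dp unfolding D_def by simp
  ultimately show ?thesis using Dc by blast
qed



fun cheb :: "nat \<Rightarrow> real poly" where
  "cheb 0 = 1"
| "cheb (Suc 0) = [:0,1:]"
| "cheb (Suc (Suc m)) = [:0,2:] * cheb (Suc m) - cheb m"

lemma degree_cheb: "degree (cheb m) \<le> m"
proof (induction m rule: cheb.induct)
  case (3 m)
  have "degree ([:0,2:] * cheb (Suc m)) \<le> Suc (Suc m)"
    using degree_mult_le[of "[:0,2:]" "cheb (Suc m)"] 3(1) by simp
  then show ?case using degree_diff_le[of "[:0,2:] * cheb (Suc m)" "Suc (Suc m)" "cheb m"] 3(2)
    by simp
qed auto

lemma cheb_rec: "poly (cheb (Suc (Suc m))) y = 2 * y * poly (cheb (Suc m)) y - poly (cheb m) y"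
  by simp

declare cheb.simps(3)[simp del]

lemma cheb_cos: "poly (cheb m) (cos \<theta>) = cos (real m * \<theta>)"
proof (induction m rule: cheb.induct)
  case (3 m)
  have "cos (real (Suc (Suc m)) * \<theta>) = cos ((real (Suc m)) * \<theta> + \<theta>)"
    by (simp add: algebra_simps)
  also have "\<dots> = 2 * cos \<theta> * cos (real (Suc m) * \<theta>) - cos ((real (Suc m)) * \<theta> - \<theta>)"
    by (simp add: cos_add cos_diff)
  also have "(real (Suc m)) * \<theta> - \<theta> = real m * \<theta>" by (simp add: algebra_simps)
  finally show ?case using 3 by (simp only: cheb_rec)
qed auto

lemma cheb_bounded: "\<bar>y\<bar> \<le> 1 \<Longrightarrow> \<bar>poly (cheb m) y\<bar> \<le> 1"
proof -
  assume "\<bar>y\<bar> \<le> 1"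
  then have "y = cos (arccos y)" by (simp add: cos_arccos_abs)
  then have "poly (cheb m) y = cos (real m * arccos y)" by (metis cheb_cos)
  then show ?thesis by simp
qed

lemma cheb_growth:
  assumes "1 \<le> y"
  shows "1 + (real m)^2 * (y - 1) \<le> poly (cheb m) y
       \<and> (2 * real m + 1) * (y - 1) \<le> poly (cheb (Suc m)) y - poly (cheb m) y"
proof (induction m)
  case 0
  then show ?case by simp
next
  case (Suc m)
  have a: "1 + (real (Suc m))^2 * (y - 1) \<le> poly (cheb (Suc m)) y"
  proof -
    have "1 + (real (Suc m))^2 * (y - 1) = 1 + (real m)^2 * (y - 1) + (2 * real m + 1) * (y - 1)"
      by (simp add: algebra_simps power2_eq_square)
    then show ?thesis using Suc by linarith
  qed
  have one: "1 \<le> poly (cheb (Suc m)) y"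
    using a assms by (smt (verit) mult_nonneg_nonneg zero_le_power2)
  have "poly (cheb (Suc (Suc m))) y - poly (cheb (Suc m)) y
      = (poly (cheb (Suc m)) y - poly (cheb m) y) + 2 * (y - 1) * poly (cheb (Suc m)) y"
    by (simp only: cheb_rec) (simp add: algebra_simps)
  moreover have "2 * (y - 1) \<le> 2 * (y - 1) * poly (cheb (Suc m)) y"
    using one assms by (simp add: mult_le_cancel_left1)
  ultimately have "(2 * real (Suc m) + 1) * (y - 1) \<le> poly (cheb (Suc (Suc m))) y - poly (cheb (Suc m)) y"
    using Suc by (simp add: algebra_simps)
  then show ?case using a by blast
qed

lemma cheb_ge1: "1 \<le> y \<Longrightarrow> 1 \<le> poly (cheb m) y"
  using cheb_growth[of y m] by (smt (verit) mult_nonneg_nonneg zero_le_power2)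

lemma cheb_mono:
  assumes "1 \<le> y" "y \<le> z"
  shows "poly (cheb m) y \<le> poly (cheb m) z
       \<and> poly (cheb (Suc m)) y - poly (cheb m) y \<le> poly (cheb (Suc m)) z - poly (cheb m) z"
proof (induction m)
  case 0
  then show ?case using assms by simp
next
  case (Suc m)
  have a: "poly (cheb (Suc m)) y \<le> poly (cheb (Suc m)) z" using Suc by linarith
  have "2 * (y - 1) * poly (cheb (Suc m)) y \<le> 2 * (z - 1) * poly (cheb (Suc m)) z"
    using a assms cheb_ge1[of y "Suc m"] by (intro mult_mono) auto
  then show ?case using a Suc
    by (simp only: cheb_rec) (simp add: algebra_simps)
qed

definition lvl :: "nat \<Rightarrow> real \<Rightarrow> nat \<Rightarrow> real poly" where
  "lvl n t m = smult (1 / poly (cheb m) ((n+1+t)/(n+1-t)))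
      (cheb m \<circ>\<^sub>p [:(n+1+t)/(n+1-t), -2/(n+1-t):])"

lemma lvl_degree: "degree (lvl n t m) \<le> m"
proof -
  have "degree [:a, b:] \<le> 1" for a b :: real by simp
  then have "degree (cheb m \<circ>\<^sub>p [:a, b:]) \<le> m" for a b :: real
  proof -
    have "degree (cheb m) * degree [:a,b:] \<le> m * 1"
      by (rule mult_le_mono) (simp_all add: degree_cheb)
    then show ?thesis using degree_pcompose_le[of "cheb m" "[:a,b:]"] by simp
  qed
  then show ?thesis unfolding lvl_def using degree_smult_le order_trans by blast
qed

lemma lvl_props:
  fixes n :: nat and t :: real and m :: nat
  assumes t0: "0 < t" and tn: "t \<le> real n" and m: "(real n + 1 - t) / (2 * t) \<le> (real m)^2"
  shows "poly (lvl n t m) 0 = 1"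
    and "0 \<le> s \<Longrightarrow> s \<le> real n \<Longrightarrow> \<bar>poly (lvl n t m) s\<bar> \<le> 1"
    and "t \<le> s \<Longrightarrow> s \<le> real n \<Longrightarrow> \<bar>poly (lvl n t m) s\<bar> \<le> 1/2"
proof -
  define d where "d = real n + 1 - t"
  have d0: "0 < d" using tn by (simp add: d_def)
  define y0 where "y0 = (real n + 1 + t) / d"
  have y0: "y0 = 1 + 2 * t / d" using d0 by (simp add: y0_def d_def field_simps)
  have y01: "1 \<le> y0" using y0 t0 d0 by simp
  have "1 + (real m)^2 * (y0 - 1) \<le> poly (cheb m) y0" using cheb_growth[OF y01] by simp
  moreover have "1 \<le> (real m)^2 * (y0 - 1)"
  proof -
    have dm: "d / (2 * t) \<le> (real m)^2" using m by (simp add: d_def)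
    have "y0 - 1 = 2 * t / d" using y0 by simp
    then have "(real m)^2 * (y0 - 1) \<ge> d / (2 * t) * (2 * t / d)"
      using mult_right_mono[OF dm, of "2 * t / d"] t0 d0 by simp
    then show ?thesis using t0 d0 by simp
  qed
  ultimately have T0: "2 \<le> poly (cheb m) y0" by simp
  have pl: "poly (lvl n t m) s = poly (cheb m) (y0 - 2 * s / d) / poly (cheb m) y0" for s
    unfolding lvl_def y0_def d_def by (simp add: poly_pcompose algebra_simps)
  show "poly (lvl n t m) 0 = 1" using pl[of 0] T0 by simp
  have y0p1: "y0 + 1 = 2 * (real n + 1) / d"
    using d0 by (simp add: y0_def d_def add_divide_distrib[symmetric] divide_add_eq_iff) 
  have inrange: "\<bar>y0 - 2 * s / d\<bar> \<le> 1" if s: "t \<le> s" "s \<le> real n" for s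
  proof -
    have "2 * t / d \<le> 2 * s / d" using s d0 by (simp add: divide_right_mono)
    then have up: "y0 - 2 * s / d \<le> 1" using y0 by simp
    have "2 * s / d \<le> 2 * (real n + 1) / d" using s d0 by (simp add: divide_right_mono)
    then have "- 1 \<le> y0 - 2 * s / d" using y0p1 by simp
    then show ?thesis using up by simp
  qed
  {
    assume s: "0 \<le> s" "s \<le> real n"
    show "\<bar>poly (lvl n t m) s\<bar> \<le> 1"
    proof (cases "s < t")
      case True
      have "2 * s / d \<le> 2 * t / d" using True d0 by (simp add: divide_right_mono)
      then have "1 \<le> y0 - 2 * s / d" using y0 by simp
      moreover have "y0 - 2 * s / d \<le> y0" using s d0 by simp
      ultimately have "1 \<le> poly (cheb m) (y0 - 2 * s / d)" "poly (cheb m) (y0 - 2 * s / d) \<le> poly (cheb m) y0"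
        using cheb_ge1 cheb_mono by auto
      then show ?thesis using T0 by (simp add: pl)
    next
      case False
      then have "\<bar>poly (cheb m) (y0 - 2 * s / d)\<bar> \<le> 1" using s inrange cheb_bounded by simp
      then show ?thesis using T0 by (simp add: pl)
    qed
  }
  {
    assume s: "t \<le> s" "s \<le> real n"
    have "\<bar>poly (cheb m) (y0 - 2 * s / d)\<bar> \<le> 1" using s inrange cheb_bounded by simp
    then show "\<bar>poly (lvl n t m) s\<bar> \<le> 1/2" using T0 by (simp add: pl divide_simps)
  }
qed



lemma pow_le_exp_fact: "real J ^ J \<le> exp (real J) * (\<Prod>i\<in>{1..J}. real i)"
proof (induction J)
  case 0
  then show ?case by simp
next
  case (Suc J)
  show ?case
  proof (cases "J = 0")
    case True
    then show ?thesis by simp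
  next
    case False
    have e: "(1 + 1 / real J) ^ J \<le> exp 1"
      using exp_ge_one_plus_x_over_n_power_n[of J 1] False by simp
    have "real (Suc J) ^ J = real J ^ J * (1 + 1 / real J) ^ J"
      using False by (simp add: power_mult_distrib[symmetric] field_simps)
    also have "\<dots> \<le> (exp (real J) * (\<Prod>i\<in>{1..J}. real i)) * exp 1"
      using Suc.IH e by (intro mult_mono) (auto intro!: mult_nonneg_nonneg prod_nonneg)
    finally have "real (Suc J) ^ Suc J \<le> real (Suc J) * ((exp (real J) * (\<Prod>i\<in>{1..J}. real i)) * exp 1)"
      by (simp add: mult_left_mono)
    also have "\<dots> = exp (real (Suc J)) * (\<Prod>i\<in>{1..Suc J}. real i)"
      by (simp add: prod.cl_ivl_Suc exp_add algebra_simps)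
    finally show ?thesis .
  qed
qed

definition Lp :: "nat \<Rightarrow> real poly" where
  "Lp J = (\<Prod>i\<in>{1..J}. [:1, -1/real i:])"

lemma Lp_degree: "degree (Lp J) \<le> J"
proof -
  have "degree (Lp J) \<le> sum (degree \<circ> (\<lambda>i. [:1, -1/real i:])) {1..J}"
    unfolding Lp_def by (rule degree_prod_sum_le) simp
  also have "\<dots> \<le> (\<Sum>i\<in>{1..J}. 1)" by (rule sum_mono) (simp add: o_def)
  finally show ?thesis by simp
qed

lemma Lp_0: "poly (Lp J) 0 = 1"
  by (simp add: Lp_def poly_prod)

lemma Lp_zero: "1 \<le> s \<Longrightarrow> s \<le> J \<Longrightarrow> poly (Lp J) (real s) = 0"
  unfolding Lp_def poly_prod by (rule prod_zero) (auto intro!: bexI[of _ s])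

lemma Lp_bound:
  assumes "J \<le> s"
  shows "\<bar>poly (Lp J) (real s)\<bar> \<le> real s ^ J / (\<Prod>i\<in>{1..J}. real i)"
proof -
  have "\<bar>poly (Lp J) (real s)\<bar> = (\<Prod>i\<in>{1..J}. \<bar>1 - real s / real i\<bar>)"
    unfolding Lp_def poly_prod by (simp add: abs_prod)
  also have "\<dots> \<le> (\<Prod>i\<in>{1..J}. real s / real i)"
  proof (rule prod_mono)
    fix i assume i: "i \<in> {1..J}"
    then have "1 \<le> real s / real i" using assms by auto
    then show "0 \<le> \<bar>1 - real s / real i\<bar> \<and> \<bar>1 - real s / real i\<bar> \<le> real s / real i" by simp
  qed
  also have "\<dots> = real s ^ J / (\<Prod>i\<in>{1..J}. real i)"
    by (simp add: prod_dividef)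
  finally show ?thesis .
qed

lemma geom_half: "(\<Sum>l<N. (1/2::real)^l) \<le> 2"
proof -
  have "(\<Sum>l<N. (1/2::real)^l) = 2 - 2 * (1/2)^N"
    by (induction N) (auto simp: field_simps)
  then show ?thesis by simp
qed

definition tt :: "nat \<Rightarrow> nat \<Rightarrow> nat" where
  "tt J l = (J + 1) * 4 ^ l"

definition NN :: "nat \<Rightarrow> nat \<Rightarrow> nat" where
  "NN n J = (LEAST l. n < tt J l)"

definition mm :: "nat \<Rightarrow> nat \<Rightarrow> nat \<Rightarrow> nat" where
  "mm n J l = nat \<lceil>sqrt ((real n + 1 - real (tt J l)) / (2 * real (tt J l)))\<rceil>"

definition QQ :: "nat \<Rightarrow> nat \<Rightarrow> real poly" where
  "QQ n J = Lp J * (lvl n (real (tt J 0)) (mm n J 0)) ^ (5 * J)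
      * (\<Prod>l<NN n J. (lvl n (real (tt J l)) (mm n J l)) ^ (2 * J))"

lemma tt_mono: "l \<le> l' \<Longrightarrow> tt J l \<le> tt J l'"
  unfolding tt_def by (intro mult_le_mono2 power_increasing) auto

lemma NN_ex: "\<exists>l. n < tt J l"
proof -
  have "n < 2 ^ n" by (rule less_exp)
  also have "(2::nat) ^ n \<le> 4 ^ n" by (simp add: power_mono)
  also have "4 ^ n \<le> tt J n" by (simp add: tt_def)
  finally show ?thesis by blast
qed

lemma NN_props:
  assumes "J + 1 \<le> n"
  shows "n < tt J (NN n J)" "1 \<le> NN n J" "\<And>l. l < NN n J \<Longrightarrow> tt J l \<le> n"
    "(J + 1) * 4 ^ (NN n J - 1) \<le> n"
proof -
  show a: "n < tt J (NN n J)" unfolding NN_def by (rule LeastI_ex[OF NN_ex])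
  show b: "\<And>l. l < NN n J \<Longrightarrow> tt J l \<le> n"
    unfolding NN_def using not_less_Least by (metis not_less)
  show c: "1 \<le> NN n J"
  proof (rule ccontr)
    assume "\<not> 1 \<le> NN n J"
    then have "NN n J = 0" by simp
    then show False using a assms by (simp add: tt_def)
  qed
  show "(J + 1) * 4 ^ (NN n J - 1) \<le> n" using b[of "NN n J - 1"] c by (simp add: tt_def)
qed

lemma mm_props:
  assumes t1: "1 \<le> tt J l" and tn: "tt J l \<le> n"
  shows "(real n + 1 - real (tt J l)) / (2 * real (tt J l)) \<le> (real (mm n J l))^2"
    and "real (mm n J l) \<le> sqrt (real n / (2 * real (J + 1))) / 2 ^ l + 1"
proof -
  define X where "X = (real n + 1 - real (tt J l)) / (2 * real (tt J l))"
  have X0: "0 \<le> X" using tn t1 by (simp add: X_def)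
  have mmX: "real (mm n J l) = real_of_int \<lceil>sqrt X\<rceil>"
    unfolding mm_def X_def[symmetric] using X0 by simp
  have "sqrt X \<le> real (mm n J l)" using mmX by simp
  then have "(sqrt X)^2 \<le> (real (mm n J l))^2" by (rule power_mono) (use X0 in simp)
  then show "(real n + 1 - real (tt J l)) / (2 * real (tt J l)) \<le> (real (mm n J l))^2"
    using X0 by (simp add: X_def)
  have "X \<le> real n / (2 * real (tt J l))"
    unfolding X_def using t1 by (intro divide_right_mono) auto
  also have "\<dots> = (real n / (2 * real (J + 1))) / (2 ^ l) ^ 2"
  proof -
    have "(4::real)^l = ((2::real)^l)^2" by (simp add: power2_eq_square power_mult_distrib[symmetric])
    then show ?thesis by (simp add: tt_def algebra_simps)
  qed
  finally have "sqrt X \<le> sqrt ((real n / (2 * real (J + 1))) / (2 ^ l) ^ 2)"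
    by (rule real_sqrt_le_mono)
  also have "\<dots> = sqrt (real n / (2 * real (J + 1))) / 2 ^ l"
  proof -
    have "sqrt (((2::real) ^ l)^2) = 2 ^ l" by simp
    then show ?thesis by (metis real_sqrt_divide)
  qed
  finally have sX: "sqrt X \<le> sqrt (real n / (2 * real (J + 1))) / 2 ^ l" .
  have "real (mm n J l) < sqrt X + 1" using mmX by linarith
  then show "real (mm n J l) \<le> sqrt (real n / (2 * real (J + 1))) / 2 ^ l + 1" using sX by simp
qed

lemma lvlP:
  assumes Jn: "J + 1 \<le> n" and l: "l < NN n J"
  shows "poly (lvl n (real (tt J l)) (mm n J l)) 0 = 1"
    and "0 \<le> s \<Longrightarrow> s \<le> real n \<Longrightarrow> \<bar>poly (lvl n (real (tt J l)) (mm n J l)) s\<bar> \<le> 1"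
    and "real (tt J l) \<le> s \<Longrightarrow> s \<le> real n \<Longrightarrow> \<bar>poly (lvl n (real (tt J l)) (mm n J l)) s\<bar> \<le> 1/2"
proof -
  have "0 < tt J l" unfolding tt_def by simp
  then have t1: "1 \<le> tt J l" by simp
  have tn: "tt J l \<le> n" using NN_props(3)[OF Jn l] .
  note m = mm_props(1)[OF t1 tn]
  have t0: "0 < real (tt J l)" using t1 by simp
  have tn': "real (tt J l) \<le> real n" using tn by simp
  show "poly (lvl n (real (tt J l)) (mm n J l)) 0 = 1" by (rule lvl_props(1)[OF t0 tn' m])
  show "0 \<le> s \<Longrightarrow> s \<le> real n \<Longrightarrow> \<bar>poly (lvl n (real (tt J l)) (mm n J l)) s\<bar> \<le> 1"
    by (rule lvl_props(2)[OF t0 tn' m])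
  show "real (tt J l) \<le> s \<Longrightarrow> s \<le> real n \<Longrightarrow> \<bar>poly (lvl n (real (tt J l)) (mm n J l)) s\<bar> \<le> 1/2"
    by (rule lvl_props(3)[OF t0 tn' m])
qed

lemma QQ_0: assumes "J + 1 \<le> n" shows "poly (QQ n J) 0 = 1"
proof -
  have N1: "0 < NN n J" using NN_props(2)[OF assms] by simp
  show ?thesis unfolding QQ_def
    using lvlP(1)[OF assms N1] lvlP(1)[OF assms] by (simp add: Lp_0 poly_prod)
qed

lemma degree_pow_bound: "degree p \<le> m \<Longrightarrow> degree (p ^ a) \<le> a * m"
proof -
  assume "degree p \<le> m"
  then have "degree p * a \<le> m * a" by (rule mult_le_mono1)
  then show ?thesis by (metis degree_power_le mult.commute order_trans)
qed

lemma QQ_degree: "degree (QQ n J) \<le> J + 5 * J * mm n J 0 + (\<Sum>l<NN n J. 2 * J * mm n J l)"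
proof -
  have d1: "degree ((lvl n (real (tt J 0)) (mm n J 0)) ^ (5 * J)) \<le> 5 * J * mm n J 0"
    by (rule degree_pow_bound[OF lvl_degree])
  have d2: "degree (\<Prod>l<NN n J. (lvl n (real (tt J l)) (mm n J l)) ^ (2 * J)) \<le> (\<Sum>l<NN n J. 2 * J * mm n J l)"
  proof -
    have "degree (\<Prod>l<NN n J. (lvl n (real (tt J l)) (mm n J l)) ^ (2 * J))
        \<le> sum (degree \<circ> (\<lambda>l. (lvl n (real (tt J l)) (mm n J l)) ^ (2 * J))) {..<NN n J}"
      by (rule degree_prod_sum_le) simp
    also have "\<dots> \<le> (\<Sum>l<NN n J. 2 * J * mm n J l)"
    proof (rule sum_mono)
      fix l
      show "(degree \<circ> (\<lambda>l. (lvl n (real (tt J l)) (mm n J l)) ^ (2 * J))) l \<le> 2 * J * mm n J l"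
        using degree_pow_bound[OF lvl_degree, of n "real (tt J l)" "mm n J l" "2 * J"] by (simp add: o_def)
    qed
    finally show ?thesis .
  qed
  show ?thesis unfolding QQ_def
    using degree_mult_le[of "Lp J * (lvl n (real (tt J 0)) (mm n J 0)) ^ (5 * J)"
        "\<Prod>l<NN n J. (lvl n (real (tt J l)) (mm n J l)) ^ (2 * J)"]
      degree_mult_le[of "Lp J" "(lvl n (real (tt J 0)) (mm n J 0)) ^ (5 * J)"]
      Lp_degree[of J] d1 d2
    by linarith
qed

lemma prod_level_bound:
  fixes f :: "nat \<Rightarrow> real"
  assumes lN: "l < N" and f01: "\<And>i. i < N \<Longrightarrow> 0 \<le> f i \<and> f i \<le> 1"
    and fh: "\<And>i. i \<le> l \<Longrightarrow> f i \<le> c" and c0: "0 \<le> c"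
  shows "(\<Prod>i<N. f i) \<le> c ^ Suc l"
proof -
  have "(\<Prod>i<N. f i) \<le> (\<Prod>i<N. if i \<le> l then c else 1)"
    by (rule prod_mono) (use f01 fh in auto)
  also have "\<dots> = (\<Prod>i\<in>{..<N} \<inter> {i. i \<le> l}. c) * (\<Prod>i\<in>{..<N} \<inter> - {i. i \<le> l}. 1)"
    by (rule prod.If_cases) simp
  also have "{..<N} \<inter> {i. i \<le> l} = {..l}" using lN by auto
  finally show ?thesis by simp
qed

lemma QQ_bound:
  assumes J1: "1 \<le> J" and Jn: "J + 1 \<le> n" and s1: "1 \<le> s" and sn: "s \<le> n"
  shows "\<bar>poly (QQ n J) (real s)\<bar> \<le> (1/2) ^ (2 * J)"
proof (cases "s \<le> J")
  case True
  then show ?thesis unfolding QQ_def using Lp_zero[OF s1 True] by simp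
next
  case False
  then have sJ: "J + 1 \<le> s" by simp
  define N where "N = NN n J"
  have nN: "n < tt J N" using NN_props(1)[OF Jn] by (simp add: N_def)
  have N1: "1 \<le> N" using NN_props(2)[OF Jn] by (simp add: N_def)
  define l where "l = (LEAST l. s < tt J (Suc l))"
  have ex: "s < tt J (Suc (N - 1))" using nN sn N1 by simp
  have l1: "s < tt J (Suc l)" unfolding l_def by (rule LeastI[of _ "N - 1"]) (rule ex)
  have lN': "l \<le> N - 1" unfolding l_def by (rule Least_le) (rule ex)
  then have lN: "l < N" using N1 by simp
  have l2: "tt J l \<le> s"
  proof (cases l)
    case 0
    then show ?thesis using sJ by (simp add: tt_def)
  next
    case (Suc l')
    have "\<not> s < tt J (Suc l')" unfolding l_def
      by (rule not_less_Least) (use Suc in \<open>simp add: l_def\<close>)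
    then show ?thesis using Suc by simp
  qed
  define P where "P i = lvl n (real (tt J i)) (mm n J i)" for i
  have Pb: "i < N \<Longrightarrow> 0 \<le> \<bar>poly (P i) (real s)\<bar> ^ (2 * J) \<and> \<bar>poly (P i) (real s)\<bar> ^ (2 * J) \<le> 1" for i
    using lvlP(2)[OF Jn, of i "real s"] sn unfolding P_def N_def by (simp add: power_le_one)
  have Ph: "i \<le> l \<Longrightarrow> \<bar>poly (P i) (real s)\<bar> ^ (2 * J) \<le> ((1/2)::real) ^ (2 * J)" for i
  proof -
    assume il: "i \<le> l"
    then have "tt J i \<le> s" using l2 tt_mono[OF il, of J] by simp
    then have "\<bar>poly (P i) (real s)\<bar> \<le> 1/2"
      using lvlP(3)[OF Jn, of i "real s"] sn il lN unfolding P_def N_def by simp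
    then show ?thesis by (rule power_mono) simp
  qed
  have prodb: "(\<Prod>i<N. \<bar>poly (P i) (real s)\<bar> ^ (2 * J)) \<le> (((1/2)::real) ^ (2 * J)) ^ Suc l"
    by (rule prod_level_bound[OF lN Pb Ph]) auto
  have P0: "\<bar>poly (P 0) (real s)\<bar> ^ (5 * J) \<le> ((1/2)::real) ^ (5 * J)"
  proof -
    have "\<bar>poly (P 0) (real s)\<bar> \<le> 1/2"
      using lvlP(3)[OF Jn, of 0 "real s"] sn sJ N1 unfolding P_def N_def by (simp add: tt_def)
    then show ?thesis by (rule power_mono) simp
  qed
  define F where "F = (\<Prod>i\<in>{1..J}. real i)"
  have F0: "0 < F" unfolding F_def by (rule prod_pos) auto
  have JF: "real J ^ J \<le> exp (real J) * F" using pow_le_exp_fact[of J] by (simp add: F_def)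
  have Lb: "\<bar>poly (Lp J) (real s)\<bar> \<le> real s ^ J / F"
    using Lp_bound[of J s] sJ by (simp add: F_def)
  have key: "exp 1 * real s / real J \<le> 2 ^ (2 * l + 5)"
  proof -
    have "s < (J + 1) * 4 ^ Suc l" using l1 by (simp add: tt_def)
    then have "real s < real ((J + 1) * 4 ^ Suc l)" by (metis of_nat_less_iff)
    also have "\<dots> \<le> 2 * real J * 4 ^ Suc l" using J1 by simp
    finally have "real s \<le> 2 * real J * 4 ^ Suc l" by simp
    then have "real s / real J \<le> 2 * 4 ^ Suc l" using J1 by (simp add: field_simps)
    moreover have "exp 1 \<le> (3::real)" by (rule exp_le)
    ultimately have "exp 1 * (real s / real J) \<le> 3 * (2 * 4 ^ Suc l)"
      by (intro mult_mono) auto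
    also have "\<dots> \<le> 2 ^ (2 * l + 5)"
    proof -
      have "(4::real) ^ Suc l = 2 ^ (2 * l + 2)" by (simp add: power_mult power_add)
      then show ?thesis by (simp add: power_add)
    qed
    finally show ?thesis by simp
  qed
  have Lb2: "real s ^ J / F \<le> (2 ^ (2 * l + 5)) ^ J"
  proof -
    have "real s ^ J / F \<le> real s ^ J * (exp (real J) / real J ^ J)"
    proof -
      have "1 / F \<le> exp (real J) / real J ^ J" using JF F0 J1 by (simp add: field_simps)
      then have "real s ^ J * (1 / F) \<le> real s ^ J * (exp (real J) / real J ^ J)"
        by (rule mult_left_mono) simp
      then show ?thesis by simp
    qed
    also have "\<dots> = (exp 1 * real s / real J) ^ J"
      by (simp add: power_mult_distrib power_divide exp_of_nat_mult[symmetric])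
    also have "\<dots> \<le> (2 ^ (2 * l + 5)) ^ J"
      by (rule power_mono[OF key]) simp
    finally show ?thesis .
  qed
  have "\<bar>poly (QQ n J) (real s)\<bar> = \<bar>poly (Lp J) (real s)\<bar> * \<bar>poly (P 0) (real s)\<bar> ^ (5 * J)
        * (\<Prod>i<N. \<bar>poly (P i) (real s)\<bar> ^ (2 * J))"
    unfolding QQ_def P_def N_def by (simp add: poly_prod abs_mult abs_prod power_abs)
  also have "\<dots> \<le> (2 ^ (2 * l + 5)) ^ J * ((1/2) ^ (5 * J)) * (((1/2) ^ (2 * J)) ^ Suc l)"
    using Lb Lb2 P0 prodb
    by (intro mult_mono) (auto intro!: prod_nonneg)
  also have "\<dots> = (1/2) ^ (2 * J)"
  proof -
    have "((2::real) ^ (2 * l + 5)) ^ J = 2 ^ ((2 * l + 5) * J)" by (simp add: power_mult)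
    moreover have "((1/2::real) ^ (5 * J)) * (((1/2) ^ (2 * J)) ^ Suc l) = (1/2) ^ ((2 * l + 5) * J) * (1/2) ^ (2 * J)"
      by (simp add: power_mult[symmetric] power_add[symmetric] algebra_simps)
    moreover have "(2::real) ^ m * (1/2) ^ m = 1" for m by (simp add: power_mult_distrib[symmetric])
    ultimately show ?thesis by (metis mult.assoc mult_1)
  qed
  finally show ?thesis .
qed



lemma aux_exp: "6 + 2 * (m + 1) \<le> 8 * (2::nat) ^ m"
proof (induction m)
  case (Suc m)
  have "(1::nat) \<le> 2 ^ m" by simp
  moreover have e: "(8::nat) * 2 ^ Suc m = 8 * 2 ^ m + 8 * 2 ^ m" by simp
  ultimately show ?case using Suc unfolding e by simp
qed simp

lemma QQ_degree_real:
  assumes J1: "1 \<le> J" and Jn: "J + 1 \<le> n"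
  shows "real (degree (QQ n J)) \<le> 15 * real J * sqrt (real n / real (J + 1))"
proof -
  define N where "N = NN n J"
  define A where "A = sqrt (real n / (2 * real (J + 1)))"
  define B where "B = sqrt (real n / real (J + 1))"
  have N1: "1 \<le> N" using NN_props(2)[OF Jn] by (simp add: N_def)
  have A0: "0 \<le> A" by (simp add: A_def)
  have mmb: "real (mm n J l) \<le> A * (1/2) ^ l + 1" if "l < N" for l
  proof -
    have "0 < tt J l" unfolding tt_def by simp
    then have t1: "1 \<le> tt J l" by simp
    have tn: "tt J l \<le> n" using NN_props(3)[OF Jn] that by (simp add: N_def)
    have "A * (1/2) ^ l = A / 2 ^ l" by (simp add: power_divide)
    then show ?thesis using mm_props(2)[OF t1 tn] by (simp add: A_def)
  qed
  have sumb: "(\<Sum>l<N. real (mm n J l)) \<le> 2 * A + real N"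
  proof -
    have "(\<Sum>l<N. real (mm n J l)) \<le> (\<Sum>l<N. A * (1/2) ^ l + 1)"
      by (rule sum_mono) (simp add: mmb)
    also have "\<dots> = A * (\<Sum>l<N. (1/2) ^ l) + real N"
      by (simp add: sum.distrib sum_distrib_left)
    also have "\<dots> \<le> A * 2 + real N"
      using geom_half[of N] A0 by (simp add: mult_left_mono)
    finally show ?thesis by simp
  qed
  have m0: "real (mm n J 0) \<le> A + 1" using mmb[of 0] N1 by simp
  have "real (degree (QQ n J)) \<le> real (J + 5 * J * mm n J 0 + (\<Sum>l<N. 2 * J * mm n J l))"
    using QQ_degree[of n J] by (simp add: N_def del: of_nat_add of_nat_mult of_nat_sum)
  also have "\<dots> = real J + 5 * real J * real (mm n J 0) + 2 * real J * (\<Sum>l<N. real (mm n J l))"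
    by (simp add: sum_distrib_left)
  also have "\<dots> \<le> real J + 5 * real J * (A + 1) + 2 * real J * (2 * A + real N)"
    using m0 sumb J1 by (intro add_mono mult_left_mono) auto
  also have "\<dots> = real J * (9 * A) + real J * (6 + 2 * real N)"
    by (simp add: algebra_simps)
  also have "\<dots> \<le> real J * (7 * B) + real J * (8 * B)"
  proof (intro add_mono mult_left_mono)
    define x where "x = real n / real (J + 1)"
    have x0: "0 \<le> x" by (simp add: x_def)
    have "A^2 = x / 2" unfolding A_def x_def by simp
    moreover have "B^2 = x" unfolding B_def x_def by simp
    ultimately have "(9 * A)^2 = 81 / 2 * x" "(7 * B)^2 = 49 * x" by (simp_all add: power_mult_distrib)
    then have "(9 * A)^2 \<le> (7 * B)^2" using x0 by simp
    then show "9 * A \<le> 7 * B" by (rule power2_le_imp_le) (simp add: B_def)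
    have p: "(J + 1) * 4 ^ (N - 1) \<le> n" using NN_props(4)[OF Jn] by (simp add: N_def)
    have "real (4 ^ (N - 1)) \<le> real n / real (J + 1)"
    proof -
      have "real ((J + 1) * 4 ^ (N - 1)) \<le> real n" using p by (simp only: of_nat_le_iff)
      then show ?thesis by (simp add: field_simps)
    qed
    then have "sqrt (real (4 ^ (N - 1))) \<le> B" unfolding B_def by (rule real_sqrt_le_mono)
    moreover have "sqrt (real (4 ^ (N - 1))) = 2 ^ (N - 1)"
    proof -
      have "real (4 ^ (N - 1)) = (2 ^ (N - 1))^2"
        by (simp add: power2_eq_square power_mult_distrib[symmetric])
      then show ?thesis by simp
    qed
    ultimately have b2: "2 ^ (N - 1) \<le> B" by simp
    have "6 + 2 * N \<le> 8 * (2::nat) ^ (N - 1)" using aux_exp[of "N - 1"] N1 by simp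
    then have "real (6 + 2 * N) \<le> real (8 * (2::nat) ^ (N - 1))" by (simp only: of_nat_le_iff)
    then have "6 + 2 * real N \<le> 8 * 2 ^ (N - 1)" by simp
    then show "6 + 2 * real N \<le> 8 * B" using b2 by simp
  qed simp_all
  finally show ?thesis by (simp add: B_def algebra_simps)
qed

lemma two_powr_8: "(2::real) powr 8 = 256" by simp

lemma two_powr_m8: "(2::real) powr (-8) = 1 / 256"
  by (subst powr_minus) (simp only: two_powr_8 inverse_eq_divide)

theorem corollary3p3:
  fixes n :: nat and r :: real
  assumes "1 < r" and "r < real n"
  shows "\<exists>CZt \<in> carrier_mat (2 ^ n) (2 ^ n).
           spec_norm (CZ n - CZt) \<le> 2 powr (1 - 2 powr (-8) * r)
         \<and> real (pauli_deg n CZt) \<le> sqrt (real n * r)"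
proof (cases "r \<le> 256")
  case True
  obtain CZt where C: "CZt \<in> carrier_mat (2 ^ n) (2 ^ n)" "spec_norm (CZ n - CZt) \<le> 2 * (1/2)"
      "pauli_deg n CZt \<le> degree [:1/2::real:]"
  proof -
    have Q0: "\<bar>poly [:1/2::real:] 0 - 1\<bar> \<le> 1/2" by simp
    have Qb: "\<And>s. 1 \<le> s \<Longrightarrow> s \<le> n \<Longrightarrow> \<bar>poly [:1/2::real:] (real s)\<bar> \<le> 1/2" by simp
    have e0: "0 \<le> (1/2::real)" by simp
    show ?thesis using construct_from_poly[OF Q0 Qb e0] that by blast
  qed
  have "1 \<le> 2 powr (1 - 2 powr (-8) * r)"
    using True by (intro ge_one_powr_ge_zero) (auto simp: two_powr_m8)
  moreover have "pauli_deg n CZt = 0" using C(3) by simp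
  moreover have "0 \<le> sqrt (real n * r)" using assms by simp
  ultimately have "spec_norm (CZ n - CZt) \<le> 2 powr (1 - 2 powr (-8) * r)
         \<and> real (pauli_deg n CZt) \<le> sqrt (real n * r)" using C(2) by simp
  then show ?thesis using C(1) by blast
next
  case False
  define k where "k = r / 256"
  have kr: "2 powr (-8) * r = k" by (simp add: two_powr_m8 k_def)
  have k1: "1 < k" using False by (simp add: k_def)
  define J where "J = nat \<lfloor>k\<rfloor>"
  have Jk: "real J \<le> k" "k < real J + 1" using k1 by (simp_all add: J_def)
  have J1: "1 \<le> J" using k1 by (simp add: J_def le_nat_iff)
  have Jn: "J + 1 \<le> n"
  proof -
    have "real J + 1 < real n" using Jk k1 assms(2) by (simp add: k_def)
    then show ?thesis by linarith
  qed
  define e :: real where "e = (1/2) ^ (2 * J)"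
  obtain CZt where C: "CZt \<in> carrier_mat (2 ^ n) (2 ^ n)" "spec_norm (CZ n - CZt) \<le> 2 * e"
      "pauli_deg n CZt \<le> degree (QQ n J)"
  proof -
    have Q0: "\<bar>poly (QQ n J) 0 - 1\<bar> \<le> e" using QQ_0[OF Jn] by (simp add: e_def)
    have Qb: "\<And>s. 1 \<le> s \<Longrightarrow> s \<le> n \<Longrightarrow> \<bar>poly (QQ n J) (real s)\<bar> \<le> e"
      using QQ_bound[OF J1 Jn] unfolding e_def by blast
    have e0: "0 \<le> e" by (simp add: e_def)
    show ?thesis using construct_from_poly[OF Q0 Qb e0] that by blast
  qed
  have "2 * e \<le> 2 powr (1 - k)"
  proof -
    have p: "(2::real) powr (real (2 * J)) = 2 ^ (2 * J)" by (rule powr_realpow) simp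
    have "2 * e = 2 powr (1 - real (2 * J))"
      unfolding powr_diff p by (simp add: e_def power_one_over)
    also have "\<dots> \<le> 2 powr (1 - k)"
    proof (rule powr_mono)
      show "1 - real (2 * J) \<le> 1 - k" using Jk J1 by simp
    qed simp
    finally show ?thesis .
  qed
  moreover have "real (pauli_deg n CZt) \<le> sqrt (real n * r)"
  proof -
    have "real (pauli_deg n CZt) \<le> real (degree (QQ n J))" using C(3) by simp
    also have "\<dots> \<le> 15 * real J * sqrt (real n / real (J + 1))" by (rule QQ_degree_real[OF J1 Jn])
    also have "\<dots> \<le> sqrt (real n * r)"
    proof (rule real_le_rsqrt)
      have "(15 * real J * sqrt (real n / real (J + 1)))^2 = 225 * (real J ^ 2 * (real n / real (J + 1)))"
        by (simp add: power_mult_distrib)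
      also have "real J ^ 2 * (real n / real (J + 1)) \<le> real n * real J"
      proof -
        have "real J ^ 2 \<le> real J * real (J + 1)" by (simp add: power2_eq_square algebra_simps)
        then have "real J ^ 2 / real (J + 1) \<le> real J" by (simp add: divide_le_eq)
        then have "real n * (real J ^ 2 / real (J + 1)) \<le> real n * real J" by (rule mult_left_mono) simp
        then show ?thesis by (simp add: algebra_simps)
      qed
      then have "225 * (real J ^ 2 * (real n / real (J + 1))) \<le> 225 * (real n * real J)" by simp
      also have "\<dots> \<le> 256 * (real n * k)"
      proof -
        have "real n * real J \<le> real n * k" using Jk by (intro mult_left_mono) simp_all
        moreover have "0 \<le> real n * real J" by simp
        ultimately show ?thesis by linarith
      qed
      also have "\<dots> = real n * r" by (simp add: k_def)
      finally show "(15 * real J * sqrt (real n / real (J + 1)))^2 \<le> real n * r" .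
    qed
    finally show ?thesis .
  qed
  ultimately have "spec_norm (CZ n - CZt) \<le> 2 powr (1 - 2 powr (-8) * r)
         \<and> real (pauli_deg n CZt) \<le> sqrt (real n * r)" using C(2) unfolding kr by linarith
  then show ?thesis using C(1) by blast
qed


end
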